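(* Let $\mathcal{A}$ be a category with pullbacks and $\mathcal{D}$ a category. Then any orthogonal factorization system on the category $\mathrm{CartNt}[\mathcal{A},\mathcal{D}]$ (all functors $\mathcal{A}\to\mathcal{D}$, and only cartesian natural transformations as morphisms) restricts to an orthogonal factorization system on the full subcategory $\mathrm{Cart}[\mathcal{A},\mathcal{D}]$ of cartesian functors and cartesian natural transformations.
   Context: A natural transformation is cartesian if all its naturality squares are pullbacks; a functor is cartesian if it preserves pullbacks. An orthogonal factorization system $(\mathcal{E},\mathcal{M})$: both classes contain all isomorphisms and are closed under composition; each commuting square $g\circ e = m\circ f$ with $e\in\mathcal{E}$, $m\in\mathcal{M}$ has a unique diagonal $d$ with $d\circ e = f$, $m\circ d = g$; every morphism factors as $m\circ e$ with $e\in\mathcal{E}$, $m\in\mathcal{M}$. Restricting means taking the classes $\mathcal{E}\cap\mathrm{Cart}[\mathcal{A},\mathcal{D}]$ and $\mathcal{M}\cap\mathrm{Cart}[\mathcal{A},\mathcal{D}]$. *)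

theory Defs
  imports "HOL-Library.FuncSet"
begin

record ('o, 'a) cat =
  cObj  :: "'o set"
  cArr  :: "'a set"
  cDom  :: "'a \<Rightarrow> 'o"
  cCod  :: "'a \<Rightarrow> 'o"
  cId   :: "'o \<Rightarrow> 'a"
  cComp :: "'a \<Rightarrow> 'a \<Rightarrow> 'a"   (* cComp C g f = g o f, defined when cDom g = cCod f *)

definition category :: "('o, 'a) cat \<Rightarrow> bool" where
  "category C \<longleftrightarrow>
     (\<forall>f\<in>cArr C. cDom C f \<in> cObj C \<and> cCod C f \<in> cObj C) \<and>
     (\<forall>x\<in>cObj C. cId C x \<in> cArr C \<and> cDom C (cId C x) = x \<and> cCod C (cId C x) = x) \<and>
     (\<forall>f\<in>cArr C. \<forall>g\<in>cArr C. cDom C g = cCod C f \<longrightarrow>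
        cComp C g f \<in> cArr C \<and> cDom C (cComp C g f) = cDom C f \<and> cCod C (cComp C g f) = cCod C g) \<and>
     (\<forall>f\<in>cArr C. cComp C (cId C (cCod C f)) f = f \<and> cComp C f (cId C (cDom C f)) = f) \<and>
     (\<forall>f\<in>cArr C. \<forall>g\<in>cArr C. \<forall>h\<in>cArr C. cDom C g = cCod C f \<longrightarrow> cDom C h = cCod C g \<longrightarrow>
        cComp C h (cComp C g f) = cComp C (cComp C h g) f)"

definition hom :: "('o, 'a) cat \<Rightarrow> 'o \<Rightarrow> 'o \<Rightarrow> 'a set" where
  "hom C x y = {f \<in> cArr C. cDom C f = x \<and> cCod C f = y}"

definition iso :: "('o, 'a) cat \<Rightarrow> 'a \<Rightarrow> bool" where
  "iso C f \<longleftrightarrow> f \<in> cArr C \<and>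
     (\<exists>g\<in>cArr C. cDom C g = cCod C f \<and> cCod C g = cDom C f \<and>
        cComp C g f = cId C (cDom C f) \<and> cComp C f g = cId C (cCod C f))"

definition pullback :: "('o, 'a) cat \<Rightarrow> 'a \<Rightarrow> 'a \<Rightarrow> 'a \<Rightarrow> 'a \<Rightarrow> bool" where
  "pullback C f g p q \<longleftrightarrow>
     f \<in> cArr C \<and> g \<in> cArr C \<and> p \<in> cArr C \<and> q \<in> cArr C \<and>
     cCod C f = cCod C g \<and> cCod C p = cDom C f \<and> cCod C q = cDom C g \<and> cDom C p = cDom C q \<and>
     cComp C f p = cComp C g q \<and>
     (\<forall>p' q'. p' \<in> cArr C \<and> q' \<in> cArr C \<and> cDom C p' = cDom C q' \<and>
        cCod C p' = cDom C f \<and> cCod C q' = cDom C g \<and> cComp C f p' = cComp C g q' \<longrightarrow>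
        (\<exists>!h. h \<in> cArr C \<and> cDom C h = cDom C p' \<and> cCod C h = cDom C p \<and>
              cComp C p h = p' \<and> cComp C q h = q'))"

definition has_pullbacks :: "('o, 'a) cat \<Rightarrow> bool" where
  "has_pullbacks C \<longleftrightarrow>
     (\<forall>f\<in>cArr C. \<forall>g\<in>cArr C. cCod C f = cCod C g \<longrightarrow> (\<exists>p q. pullback C f g p q))"

type_synonym ('o1, 'a1, 'o2, 'a2) ftor = "('o1 \<Rightarrow> 'o2) \<times> ('a1 \<Rightarrow> 'a2)"

definition fobj :: "('o1, 'a1, 'o2, 'a2) ftor \<Rightarrow> 'o1 \<Rightarrow> 'o2" where "fobj F = fst F"
definition farr :: "('o1, 'a1, 'o2, 'a2) ftor \<Rightarrow> 'a1 \<Rightarrow> 'a2" where "farr F = snd F"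

definition "functor" :: "('o1, 'a1) cat \<Rightarrow> ('o2, 'a2) cat \<Rightarrow> ('o1, 'a1, 'o2, 'a2) ftor \<Rightarrow> bool" where
  "functor A B F \<longleftrightarrow>
     (\<forall>x\<in>cObj A. fobj F x \<in> cObj B) \<and>
     (\<forall>f\<in>cArr A. farr F f \<in> hom B (fobj F (cDom A f)) (fobj F (cCod A f))) \<and>
     (\<forall>x\<in>cObj A. farr F (cId A x) = cId B (fobj F x)) \<and>
     (\<forall>f\<in>cArr A. \<forall>g\<in>cArr A. cDom A g = cCod A f \<longrightarrow>
        farr F (cComp A g f) = cComp B (farr F g) (farr F f)) \<and>
     (\<forall>x. x \<notin> cObj A \<longrightarrow> fobj F x = undefined) \<and>
     (\<forall>f. f \<notin> cArr A \<longrightarrow> farr F f = undefined)"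

definition nat_trans :: "('o1, 'a1) cat \<Rightarrow> ('o2, 'a2) cat \<Rightarrow> ('o1, 'a1, 'o2, 'a2) ftor \<Rightarrow>
    ('o1, 'a1, 'o2, 'a2) ftor \<Rightarrow> ('o1 \<Rightarrow> 'a2) \<Rightarrow> bool" where
  "nat_trans A B F G \<alpha> \<longleftrightarrow> functor A B F \<and> functor A B G \<and>
     (\<forall>x\<in>cObj A. \<alpha> x \<in> hom B (fobj F x) (fobj G x)) \<and>
     (\<forall>u\<in>cArr A. cComp B (farr G u) (\<alpha> (cDom A u)) = cComp B (\<alpha> (cCod A u)) (farr F u)) \<and>
     (\<forall>x. x \<notin> cObj A \<longrightarrow> \<alpha> x = undefined)"

definition cartesian_functor :: "('o1, 'a1) cat \<Rightarrow> ('o2, 'a2) cat \<Rightarrow> ('o1, 'a1, 'o2, 'a2) ftor \<Rightarrow> bool" where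
  "cartesian_functor A B F \<longleftrightarrow> functor A B F \<and>
     (\<forall>f g p q. pullback A f g p q \<longrightarrow> pullback B (farr F f) (farr F g) (farr F p) (farr F q))"

definition cartesian_nt :: "('o1, 'a1) cat \<Rightarrow> ('o2, 'a2) cat \<Rightarrow> ('o1, 'a1, 'o2, 'a2) ftor \<Rightarrow>
    ('o1, 'a1, 'o2, 'a2) ftor \<Rightarrow> ('o1 \<Rightarrow> 'a2) \<Rightarrow> bool" where
  "cartesian_nt A B F G \<alpha> \<longleftrightarrow> nat_trans A B F G \<alpha> \<and>
     (\<forall>u\<in>cArr A. pullback B (farr G u) (\<alpha> (cCod A u)) (\<alpha> (cDom A u)) (farr F u))"

type_synonym ('o1, 'a1, 'o2, 'a2) ntarr =
  "('o1, 'a1, 'o2, 'a2) ftor \<times> ('o1, 'a1, 'o2, 'a2) ftor \<times> ('o1 \<Rightarrow> 'a2)"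

definition CartNt :: "('o1, 'a1) cat \<Rightarrow> ('o2, 'a2) cat \<Rightarrow>
    (('o1, 'a1, 'o2, 'a2) ftor, ('o1, 'a1, 'o2, 'a2) ntarr) cat" where
  "CartNt A D = \<lparr> cObj = {F. functor A D F},
     cArr = {(F, G, \<alpha>). cartesian_nt A D F G \<alpha>},
     cDom = (\<lambda>(F, G, \<alpha>). F),
     cCod = (\<lambda>(F, G, \<alpha>). G),
     cId = (\<lambda>F. (F, F, \<lambda>x\<in>cObj A. cId D (fobj F x))),
     cComp = (\<lambda>(G', H, \<beta>) (F, G, \<alpha>). (F, H, \<lambda>x\<in>cObj A. cComp D (\<beta> x) (\<alpha> x))) \<rparr>"

definition Cart :: "('o1, 'a1) cat \<Rightarrow> ('o2, 'a2) cat \<Rightarrow>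
    (('o1, 'a1, 'o2, 'a2) ftor, ('o1, 'a1, 'o2, 'a2) ntarr) cat" where
  "Cart A D = \<lparr> cObj = {F. cartesian_functor A D F},
     cArr = {(F, G, \<alpha>). cartesian_functor A D F \<and> cartesian_functor A D G \<and> cartesian_nt A D F G \<alpha>},
     cDom = (\<lambda>(F, G, \<alpha>). F),
     cCod = (\<lambda>(F, G, \<alpha>). G),
     cId = (\<lambda>F. (F, F, \<lambda>x\<in>cObj A. cId D (fobj F x))),
     cComp = (\<lambda>(G', H, \<beta>) (F, G, \<alpha>). (F, H, \<lambda>x\<in>cObj A. cComp D (\<beta> x) (\<alpha> x))) \<rparr>"

definition ofs :: "('o, 'a) cat \<Rightarrow> 'a set \<Rightarrow> 'a set \<Rightarrow> bool" where
  "ofs C E M \<longleftrightarrow>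
     E \<subseteq> cArr C \<and> M \<subseteq> cArr C \<and>
     (\<forall>f. iso C f \<longrightarrow> f \<in> E \<and> f \<in> M) \<and>
     (\<forall>e1\<in>E. \<forall>e2\<in>E. cDom C e2 = cCod C e1 \<longrightarrow> cComp C e2 e1 \<in> E) \<and>
     (\<forall>m1\<in>M. \<forall>m2\<in>M. cDom C m2 = cCod C m1 \<longrightarrow> cComp C m2 m1 \<in> M) \<and>
     (\<forall>e\<in>E. \<forall>m\<in>M. \<forall>f\<in>cArr C. \<forall>g\<in>cArr C.
        cDom C f = cDom C e \<and> cCod C f = cDom C m \<and> cDom C g = cCod C e \<and> cCod C g = cCod C m \<and>
        cComp C g e = cComp C m f \<longrightarrow>
        (\<exists>!d. d \<in> cArr C \<and> cDom C d = cCod C e \<and> cCod C d = cDom C m \<and>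
              cComp C d e = f \<and> cComp C m d = g)) \<and>
     (\<forall>h\<in>cArr C. \<exists>e\<in>E. \<exists>m\<in>M. cDom C m = cCod C e \<and> cComp C m e = h)"

end

theory Submission
  imports Defs
begin

lemma comp_hom:
  assumes "category C" "f \<in> hom C x y" "g \<in> hom C y z"
  shows "cComp C g f \<in> hom C x z"
  using assms unfolding category_def hom_def by auto

lemma assoc_hom:
  assumes "category C" "f \<in> hom C x y" "g \<in> hom C y z" "h \<in> hom C z w"
  shows "cComp C h (cComp C g f) = cComp C (cComp C h g) f"
  using assms unfolding category_def hom_def by auto

lemma pb_ex:
  assumes "pullback C f g p q" "p' \<in> hom C T (cDom C f)" "q' \<in> hom C T (cDom C g)"
    "cComp C f p' = cComp C g q'"
  shows "\<exists>h\<in>hom C T (cDom C p). cComp C p h = p' \<and> cComp C q h = q'"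
proof -
  have U: "\<forall>p' q'. p' \<in> cArr C \<and> q' \<in> cArr C \<and> cDom C p' = cDom C q' \<and>
        cCod C p' = cDom C f \<and> cCod C q' = cDom C g \<and> cComp C f p' = cComp C g q' \<longrightarrow>
        (\<exists>!h. h \<in> cArr C \<and> cDom C h = cDom C p' \<and> cCod C h = cDom C p \<and>
              cComp C p h = p' \<and> cComp C q h = q')"
    using assms(1) unfolding pullback_def by blast
  have "\<exists>!h. h \<in> cArr C \<and> cDom C h = cDom C p' \<and> cCod C h = cDom C p \<and>
              cComp C p h = p' \<and> cComp C q h = q'"
    apply (rule U[rule_format])
    using assms(2-4) unfolding hom_def by auto
  then show ?thesis using assms(2) unfolding hom_def by auto
qed

lemma pb_uniq:
  assumes "pullback C f g p q" "p' \<in> hom C T (cDom C f)" "q' \<in> hom C T (cDom C g)"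
    "cComp C f p' = cComp C g q'"
    "h1 \<in> hom C T (cDom C p)" "h2 \<in> hom C T (cDom C p)"
    "cComp C p h1 = p'" "cComp C q h1 = q'" "cComp C p h2 = p'" "cComp C q h2 = q'"
  shows "h1 = h2"
proof -
  have U: "\<forall>p' q'. p' \<in> cArr C \<and> q' \<in> cArr C \<and> cDom C p' = cDom C q' \<and>
        cCod C p' = cDom C f \<and> cCod C q' = cDom C g \<and> cComp C f p' = cComp C g q' \<longrightarrow>
        (\<exists>!h. h \<in> cArr C \<and> cDom C h = cDom C p' \<and> cCod C h = cDom C p \<and>
              cComp C p h = p' \<and> cComp C q h = q')"
    using assms(1) unfolding pullback_def by blast
  have "\<exists>!h. h \<in> cArr C \<and> cDom C h = cDom C p' \<and> cCod C h = cDom C p \<and>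
              cComp C p h = p' \<and> cComp C q h = q'"
    apply (rule U[rule_format])
    using assms(2-4) unfolding hom_def by auto
  then show ?thesis using assms unfolding hom_def by auto
qed

lemma pbI:
  assumes "f \<in> hom C X Z" "g \<in> hom C Y Z" "p \<in> hom C P X" "q \<in> hom C P Y"
    "cComp C f p = cComp C g q"
    and ex: "\<And>T p' q'. p' \<in> hom C T X \<Longrightarrow> q' \<in> hom C T Y \<Longrightarrow> cComp C f p' = cComp C g q' \<Longrightarrow>
        \<exists>h\<in>hom C T P. cComp C p h = p' \<and> cComp C q h = q'"
    and un: "\<And>T h1 h2. h1 \<in> hom C T P \<Longrightarrow> h2 \<in> hom C T P \<Longrightarrow> cComp C p h1 = cComp C p h2 \<Longrightarrow>
        cComp C q h1 = cComp C q h2 \<Longrightarrow> h1 = h2"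
  shows "pullback C f g p q"
  unfolding pullback_def
proof (intro conjI allI impI)
  fix p' q'
  assume a: "p' \<in> cArr C \<and> q' \<in> cArr C \<and> cDom C p' = cDom C q' \<and>
        cCod C p' = cDom C f \<and> cCod C q' = cDom C g \<and> cComp C f p' = cComp C g q'"
  then have "p' \<in> hom C (cDom C p') X" "q' \<in> hom C (cDom C p') Y"
    using assms(1,2) unfolding hom_def by auto
  then obtain h where h: "h \<in> hom C (cDom C p') P" "cComp C p h = p'" "cComp C q h = q'"
    using ex a by blast
  show "\<exists>!h. h \<in> cArr C \<and> cDom C h = cDom C p' \<and> cCod C h = cDom C p \<and>
              cComp C p h = p' \<and> cComp C q h = q'"
  proof (rule ex1I[of _ h])
    show "h \<in> cArr C \<and> cDom C h = cDom C p' \<and> cCod C h = cDom C p \<and>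
              cComp C p h = p' \<and> cComp C q h = q'" using h assms(3) unfolding hom_def by auto
  next
    fix h' assume "h' \<in> cArr C \<and> cDom C h' = cDom C p' \<and> cCod C h' = cDom C p \<and>
              cComp C p h' = p' \<and> cComp C q h' = q'"
    then show "h' = h" using un[of h' "cDom C p'" h] h assms(3) unfolding hom_def by auto
  qed
qed (use assms in \<open>auto simp: hom_def\<close>)

lemma cart_mid:
  assumes A: "category A" and D: "category D" and m: "cartesian_nt A D G H m"
    and H: "cartesian_functor A D H"
  shows "cartesian_functor A D G"
proof -
  have nt: "nat_trans A D G H m" using m unfolding cartesian_nt_def by blast
  have FG: "functor A D G" and FH: "functor A D H" using nt unfolding nat_trans_def by auto
  have mh: "\<And>x. x \<in> cObj A \<Longrightarrow> m x \<in> hom D (fobj G x) (fobj H x)"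
    using nt unfolding nat_trans_def by auto
  have msq: "\<And>u. u \<in> cArr A \<Longrightarrow> pullback D (farr H u) (m (cCod A u)) (m (cDom A u)) (farr G u)"
    using m unfolding cartesian_nt_def by auto
  have nat: "\<And>u. u \<in> cArr A \<Longrightarrow> cComp D (farr H u) (m (cDom A u)) = cComp D (m (cCod A u)) (farr G u)"
    using nt unfolding nat_trans_def by auto
  have Gh: "\<And>u. u \<in> cArr A \<Longrightarrow> farr G u \<in> hom D (fobj G (cDom A u)) (fobj G (cCod A u))"
    using FG unfolding functor_def by auto
  have Hh: "\<And>u. u \<in> cArr A \<Longrightarrow> farr H u \<in> hom D (fobj H (cDom A u)) (fobj H (cCod A u))"
    using FH unfolding functor_def by auto
  have Gc: "\<And>u v. u \<in> cArr A \<Longrightarrow> v \<in> cArr A \<Longrightarrow> cDom A v = cCod A u \<Longrightarrow>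
      farr G (cComp A v u) = cComp D (farr G v) (farr G u)"
    using FG unfolding functor_def by auto
  have domo: "\<And>u. u \<in> cArr A \<Longrightarrow> cDom A u \<in> cObj A \<and> cCod A u \<in> cObj A"
    using A unfolding category_def by auto
  have homdom: "\<And>f x y. f \<in> hom D x y \<Longrightarrow> cDom D f = x \<and> cCod D f = y"
    unfolding hom_def by auto
  show ?thesis unfolding cartesian_functor_def
  proof (intro conjI allI impI FG)
    fix f g p q assume pb: "pullback A f g p q"
    have ar: "f \<in> cArr A" "g \<in> cArr A" "p \<in> cArr A" "q \<in> cArr A"
      using pb unfolding pullback_def by auto
    define X where "X = cDom A f"
    define Y where "Y = cDom A g"
    define Z where "Z = cCod A f"
    define P where "P = cDom A p"
    have dc: "cCod A g = Z" "cCod A p = X" "cCod A q = Y" "cDom A q = P"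
      using pb unfolding pullback_def X_def Y_def Z_def P_def by auto
    have ob: "X \<in> cObj A" "Y \<in> cObj A" "Z \<in> cObj A" "P \<in> cObj A"
      using domo ar dc unfolding X_def Y_def Z_def P_def by auto
    have Gf: "farr G f \<in> hom D (fobj G X) (fobj G Z)" using Gh[OF ar(1)] X_def Z_def by simp
    have Gg: "farr G g \<in> hom D (fobj G Y) (fobj G Z)" using Gh[OF ar(2)] Y_def dc by simp
    have Gp: "farr G p \<in> hom D (fobj G P) (fobj G X)" using Gh[OF ar(3)] P_def dc by simp
    have Gq: "farr G q \<in> hom D (fobj G P) (fobj G Y)" using Gh[OF ar(4)] dc by simp
    have Hf: "farr H f \<in> hom D (fobj H X) (fobj H Z)" using Hh[OF ar(1)] X_def Z_def by simp
    have Hg: "farr H g \<in> hom D (fobj H Y) (fobj H Z)" using Hh[OF ar(2)] Y_def dc by simp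
    have Hp: "farr H p \<in> hom D (fobj H P) (fobj H X)" using Hh[OF ar(3)] P_def dc by simp
    have Hq: "farr H q \<in> hom D (fobj H P) (fobj H Y)" using Hh[OF ar(4)] dc by simp
    have mX: "m X \<in> hom D (fobj G X) (fobj H X)" using mh ob by auto
    have mY: "m Y \<in> hom D (fobj G Y) (fobj H Y)" using mh ob by auto
    have mZ: "m Z \<in> hom D (fobj G Z) (fobj H Z)" using mh ob by auto
    have mP: "m P \<in> hom D (fobj G P) (fobj H P)" using mh ob by auto
    have nf: "cComp D (farr H f) (m X) = cComp D (m Z) (farr G f)" using nat[OF ar(1)] X_def Z_def by simp
    have ng: "cComp D (farr H g) (m Y) = cComp D (m Z) (farr G g)" using nat[OF ar(2)] Y_def dc by simp
    have np: "cComp D (farr H p) (m P) = cComp D (m X) (farr G p)" using nat[OF ar(3)] P_def dc by simp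
    have nq: "cComp D (farr H q) (m P) = cComp D (m Y) (farr G q)" using nat[OF ar(4)] dc by simp
    have sp: "pullback D (farr H p) (m X) (m P) (farr G p)" using msq[OF ar(3)] P_def dc by simp
    have sg: "pullback D (farr H g) (m Z) (m Y) (farr G g)" using msq[OF ar(2)] Y_def dc by simp
    have Hpb: "pullback D (farr H f) (farr H g) (farr H p) (farr H q)"
      using H pb unfolding cartesian_functor_def by blast
    have fpA: "cComp A f p = cComp A g q" using pb unfolding pullback_def by blast
    have Gsq: "cComp D (farr G f) (farr G p) = cComp D (farr G g) (farr G q)"
      using Gc[of p f] Gc[of q g] ar dc fpA X_def Y_def by simp
    note hd = homdom[OF Gf] homdom[OF Gg] homdom[OF Gp] homdom[OF Gq]
      homdom[OF Hf] homdom[OF Hg] homdom[OF Hp] homdom[OF Hq]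
      homdom[OF mX] homdom[OF mY] homdom[OF mZ] homdom[OF mP]
    show "pullback D (farr G f) (farr G g) (farr G p) (farr G q)"
    proof (rule pbI[OF Gf Gg Gp Gq Gsq])
      fix T a b
      assume a: "a \<in> hom D T (fobj G X)" and b: "b \<in> hom D T (fobj G Y)"
        and ab: "cComp D (farr G f) a = cComp D (farr G g) b"
      define a' where "a' = cComp D (m X) a"
      define b' where "b' = cComp D (m Y) b"
      have a': "a' \<in> hom D T (fobj H X)" unfolding a'_def by (rule comp_hom[OF D a mX])
      have b': "b' \<in> hom D T (fobj H Y)" unfolding b'_def by (rule comp_hom[OF D b mY])
      have ab': "cComp D (farr H f) a' = cComp D (farr H g) b'"
      proof -
        have "cComp D (farr H f) a' = cComp D (cComp D (farr H f) (m X)) a"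
          unfolding a'_def by (rule assoc_hom[OF D a mX Hf])
        also have "\<dots> = cComp D (cComp D (m Z) (farr G f)) a" by (simp only: nf)
        also have "\<dots> = cComp D (m Z) (cComp D (farr G f) a)" by (rule assoc_hom[OF D a Gf mZ, symmetric])
        also have "\<dots> = cComp D (m Z) (cComp D (farr G g) b)" by (simp only: ab)
        also have "\<dots> = cComp D (cComp D (m Z) (farr G g)) b" by (rule assoc_hom[OF D b Gg mZ])
        also have "\<dots> = cComp D (cComp D (farr H g) (m Y)) b" by (simp only: ng)
        also have "\<dots> = cComp D (farr H g) b'" unfolding b'_def by (rule assoc_hom[OF D b mY Hg, symmetric])
        finally show ?thesis .
      qed
      have a'': "a' \<in> hom D T (cDom D (farr H f))" using a' hd by simp
      have b'': "b' \<in> hom D T (cDom D (farr H g))" using b' hd by simp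
      obtain k where k0: "k \<in> hom D T (cDom D (farr H p))" "cComp D (farr H p) k = a'" "cComp D (farr H q) k = b'"
        using pb_ex[OF Hpb a'' b'' ab'] by blast
      have k: "k \<in> hom D T (fobj H P)" using k0(1) hd by simp
      have k'': "k \<in> hom D T (cDom D (farr H p))" by (rule k0(1))
      have a2: "a \<in> hom D T (cDom D (m X))" using a hd by simp
      have ka: "cComp D (farr H p) k = cComp D (m X) a" using k0(2) a'_def by simp
      obtain l where l0: "l \<in> hom D T (cDom D (m P))" "cComp D (m P) l = k" "cComp D (farr G p) l = a"
        using pb_ex[OF sp k'' a2 ka] by blast
      have l: "l \<in> hom D T (fobj G P)" using l0(1) hd by simp
      have Gql: "cComp D (farr G q) l \<in> hom D T (fobj G Y)" by (rule comp_hom[OF D l Gq])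
      have c1: "cComp D (m Y) (cComp D (farr G q) l) = b'"
      proof -
        have "cComp D (m Y) (cComp D (farr G q) l) = cComp D (cComp D (m Y) (farr G q)) l"
          by (rule assoc_hom[OF D l Gq mY])
        also have "\<dots> = cComp D (cComp D (farr H q) (m P)) l" by (simp only: nq)
        also have "\<dots> = cComp D (farr H q) (cComp D (m P) l)" by (rule assoc_hom[OF D l mP Hq, symmetric])
        also have "\<dots> = b'" using l0(2) k0(3) by simp
        finally show ?thesis .
      qed
      have c2: "cComp D (farr G g) (cComp D (farr G q) l) = cComp D (farr G g) b"
      proof -
        have "cComp D (farr G g) (cComp D (farr G q) l) = cComp D (cComp D (farr G g) (farr G q)) l"
          by (rule assoc_hom[OF D l Gq Gg])
        also have "\<dots> = cComp D (cComp D (farr G f) (farr G p)) l" by (simp only: Gsq)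
        also have "\<dots> = cComp D (farr G f) (cComp D (farr G p) l)" by (rule assoc_hom[OF D l Gp Gf, symmetric])
        also have "\<dots> = cComp D (farr G g) b" using l0(3) ab by simp
        finally show ?thesis .
      qed
      have gb: "cComp D (farr G g) b \<in> hom D T (fobj G Z)" by (rule comp_hom[OF D b Gg])
      have eq': "cComp D (farr H g) b' = cComp D (m Z) (cComp D (farr G g) b)"
      proof -
        have "cComp D (farr H g) b' = cComp D (cComp D (farr H g) (m Y)) b"
          unfolding b'_def by (rule assoc_hom[OF D b mY Hg])
        also have "\<dots> = cComp D (cComp D (m Z) (farr G g)) b" by (simp only: ng)
        also have "\<dots> = cComp D (m Z) (cComp D (farr G g) b)" by (rule assoc_hom[OF D b Gg mZ, symmetric])
        finally show ?thesis .
      qed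
      have b3: "b' \<in> hom D T (cDom D (farr H g))" using b' hd by simp
      have gb3: "cComp D (farr G g) b \<in> hom D T (cDom D (m Z))" using gb hd by simp
      have Gql3: "cComp D (farr G q) l \<in> hom D T (cDom D (m Y))" using Gql hd by simp
      have b4: "b \<in> hom D T (cDom D (m Y))" using b hd by simp
      have "cComp D (farr G q) l = b"
        by (rule pb_uniq[OF sg b3 gb3 eq' Gql3 b4 c1 c2 b'_def[symmetric] refl])
      then show "\<exists>h\<in>hom D T (fobj G P). cComp D (farr G p) h = a \<and> cComp D (farr G q) h = b"
        using l l0(3) by blast
    next
      fix T h1 h2
      assume h1: "h1 \<in> hom D T (fobj G P)" and h2: "h2 \<in> hom D T (fobj G P)"
        and e1: "cComp D (farr G p) h1 = cComp D (farr G p) h2"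
        and e2: "cComp D (farr G q) h1 = cComp D (farr G q) h2"
      define a where "a = cComp D (farr G p) h1"
      define b where "b = cComp D (farr G q) h1"
      have a: "a \<in> hom D T (fobj G X)" unfolding a_def by (rule comp_hom[OF D h1 Gp])
      have b: "b \<in> hom D T (fobj G Y)" unfolding b_def by (rule comp_hom[OF D h1 Gq])
      define a' where "a' = cComp D (m X) a"
      define b' where "b' = cComp D (m Y) b"
      have a': "a' \<in> hom D T (fobj H X)" unfolding a'_def by (rule comp_hom[OF D a mX])
      have b': "b' \<in> hom D T (fobj H Y)" unfolding b'_def by (rule comp_hom[OF D b mY])
      have kp: "cComp D (farr H p) (cComp D (m P) h) = cComp D (m X) (cComp D (farr G p) h)"
        if h: "h \<in> hom D T (fobj G P)" for h
      proof -
        have "cComp D (farr H p) (cComp D (m P) h) = cComp D (cComp D (farr H p) (m P)) h"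
          by (rule assoc_hom[OF D h mP Hp])
        also have "\<dots> = cComp D (cComp D (m X) (farr G p)) h" by (simp only: np)
        also have "\<dots> = cComp D (m X) (cComp D (farr G p) h)" by (rule assoc_hom[OF D h Gp mX, symmetric])
        finally show ?thesis .
      qed
      have kq: "cComp D (farr H q) (cComp D (m P) h) = cComp D (m Y) (cComp D (farr G q) h)"
        if h: "h \<in> hom D T (fobj G P)" for h
      proof -
        have "cComp D (farr H q) (cComp D (m P) h) = cComp D (cComp D (farr H q) (m P)) h"
          by (rule assoc_hom[OF D h mP Hq])
        also have "\<dots> = cComp D (cComp D (m Y) (farr G q)) h" by (simp only: nq)
        also have "\<dots> = cComp D (m Y) (cComp D (farr G q) h)" by (rule assoc_hom[OF D h Gq mY, symmetric])
        finally show ?thesis .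
      qed
      have ab': "cComp D (farr H f) a' = cComp D (farr H g) b'"
      proof -
        have "cComp D (farr H f) a' = cComp D (farr H f) (cComp D (farr H p) (cComp D (m P) h1))"
          unfolding a'_def a_def kp[OF h1] ..
        also have "\<dots> = cComp D (cComp D (farr H f) (farr H p)) (cComp D (m P) h1)"
          by (rule assoc_hom[OF D comp_hom[OF D h1 mP] Hp Hf])
        also have "\<dots> = cComp D (cComp D (farr H g) (farr H q)) (cComp D (m P) h1)"
          using Hpb unfolding pullback_def by simp
        also have "\<dots> = cComp D (farr H g) (cComp D (farr H q) (cComp D (m P) h1))"
          by (rule assoc_hom[OF D comp_hom[OF D h1 mP] Hq Hg, symmetric])
        also have "\<dots> = cComp D (farr H g) b'" unfolding b'_def b_def kq[OF h1] ..
        finally show ?thesis .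
      qed
      have k1: "cComp D (m P) h1 \<in> hom D T (cDom D (farr H p))" using comp_hom[OF D h1 mP] hd by simp
      have k2: "cComp D (m P) h2 \<in> hom D T (cDom D (farr H p))" using comp_hom[OF D h2 mP] hd by simp
      have a3: "a' \<in> hom D T (cDom D (farr H f))" using a' hd by simp
      have b3: "b' \<in> hom D T (cDom D (farr H g))" using b' hd by simp
      have keq: "cComp D (m P) h1 = cComp D (m P) h2"
      proof (rule pb_uniq[OF Hpb a3 b3 ab' k1 k2])
        show "cComp D (farr H p) (cComp D (m P) h1) = a'" unfolding a'_def a_def kp[OF h1] ..
        show "cComp D (farr H q) (cComp D (m P) h1) = b'" unfolding b'_def b_def kq[OF h1] ..
        show "cComp D (farr H p) (cComp D (m P) h2) = a'" unfolding a'_def a_def kp[OF h2] e1 ..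
        show "cComp D (farr H q) (cComp D (m P) h2) = b'" unfolding b'_def b_def kq[OF h2] e2 ..
      qed
      have k4: "cComp D (m P) h1 \<in> hom D T (cDom D (farr H p))" by (rule k1)
      have a4: "a \<in> hom D T (cDom D (m X))" using a hd by simp
      have h1': "h1 \<in> hom D T (cDom D (m P))" using h1 hd by simp
      have h2': "h2 \<in> hom D T (cDom D (m P))" using h2 hd by simp
      show "h1 = h2"
      proof (rule pb_uniq[OF sp k4 a4 _ h1' h2'])
        show "cComp D (farr H p) (cComp D (m P) h1) = cComp D (m X) a" unfolding a_def by (rule kp[OF h1])
      qed (use keq e1 a_def in auto)
    qed
  qed
qed

lemma Cart_ops:
  "cDom (Cart A D) = cDom (CartNt A D)" "cCod (Cart A D) = cCod (CartNt A D)"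
  "cComp (Cart A D) = cComp (CartNt A D)" "cId (Cart A D) = cId (CartNt A D)"
  by (simp_all add: Cart_def CartNt_def)

lemma CartNt_arr:
  "x \<in> cArr (CartNt A D) \<longleftrightarrow> cartesian_nt A D (cDom (CartNt A D) x) (cCod (CartNt A D) x) (snd (snd x))"
  by (cases x) (auto simp: CartNt_def)

lemma Cart_arr:
  "x \<in> cArr (Cart A D) \<longleftrightarrow> x \<in> cArr (CartNt A D) \<and> cartesian_functor A D (cDom (CartNt A D) x)
     \<and> cartesian_functor A D (cCod (CartNt A D) x)"
  by (cases x) (auto simp: CartNt_def Cart_def)

lemma CartNt_comp_dom:
  "cDom (CartNt A D) (cComp (CartNt A D) m e) = cDom (CartNt A D) e"
  "cCod (CartNt A D) (cComp (CartNt A D) m e) = cCod (CartNt A D) m"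
  by (cases m; cases e; simp add: CartNt_def)+

lemma Cart_iso: "iso (Cart A D) f \<Longrightarrow> iso (CartNt A D) f"
  unfolding iso_def Cart_ops using Cart_arr by blast

theorem lemma4p5:
  fixes A :: "('o1, 'a1) cat" and D :: "('o2, 'a2) cat"
  assumes "category A" and "has_pullbacks A" and "category D"
    and "ofs (CartNt A D) E M"
  shows "ofs (Cart A D) (E \<inter> cArr (Cart A D)) (M \<inter> cArr (Cart A D))"
proof -
  let ?C = "CartNt A D"
  have sub: "E \<subseteq> cArr ?C" "M \<subseteq> cArr ?C" using assms(4) unfolding ofs_def by auto
  have iso: "\<And>f. iso ?C f \<Longrightarrow> f \<in> E \<and> f \<in> M" using assms(4) unfolding ofs_def by auto
  have cE: "\<And>e1 e2. e1 \<in> E \<Longrightarrow> e2 \<in> E \<Longrightarrow> cDom ?C e2 = cCod ?C e1 \<Longrightarrow> cComp ?C e2 e1 \<in> E"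
    using assms(4) unfolding ofs_def by auto
  have cM: "\<And>e1 e2. e1 \<in> M \<Longrightarrow> e2 \<in> M \<Longrightarrow> cDom ?C e2 = cCod ?C e1 \<Longrightarrow> cComp ?C e2 e1 \<in> M"
    using assms(4) unfolding ofs_def by auto
  have lift: "\<forall>e\<in>E. \<forall>m\<in>M. \<forall>f\<in>cArr ?C. \<forall>g\<in>cArr ?C.
        cDom ?C f = cDom ?C e \<and> cCod ?C f = cDom ?C m \<and> cDom ?C g = cCod ?C e \<and> cCod ?C g = cCod ?C m \<and>
        cComp ?C g e = cComp ?C m f \<longrightarrow>
        (\<exists>!d. d \<in> cArr ?C \<and> cDom ?C d = cCod ?C e \<and> cCod ?C d = cDom ?C m \<and>
              cComp ?C d e = f \<and> cComp ?C m d = g)"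
    using assms(4) unfolding ofs_def by blast
  have fact: "\<forall>h\<in>cArr ?C. \<exists>e\<in>E. \<exists>m\<in>M. cDom ?C m = cCod ?C e \<and> cComp ?C m e = h"
    using assms(4) unfolding ofs_def by blast
  show ?thesis
    unfolding ofs_def Cart_ops
  proof (intro conjI ballI allI impI)
    show "E \<inter> cArr (Cart A D) \<subseteq> cArr (Cart A D)" "M \<inter> cArr (Cart A D) \<subseteq> cArr (Cart A D)" by auto
  next
    fix f assume i: "iso (Cart A D) f"
    have "f \<in> cArr (Cart A D)" using i unfolding iso_def by (elim conjE)
    then show "f \<in> E \<inter> cArr (Cart A D)" "f \<in> M \<inter> cArr (Cart A D)"
      using iso[OF Cart_iso[OF i]] by simp_all
  next
    fix e1 e2 assume e1: "e1 \<in> E \<inter> cArr (Cart A D)" and e2: "e2 \<in> E \<inter> cArr (Cart A D)"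
      and d: "cDom ?C e2 = cCod ?C e1"
    have "cComp ?C e2 e1 \<in> E" using cE e1 e2 d by blast
    then show "cComp ?C e2 e1 \<in> E \<inter> cArr (Cart A D)"
      using sub e1 e2 by (auto simp: Cart_arr CartNt_comp_dom)
  next
    fix e1 e2 assume e1: "e1 \<in> M \<inter> cArr (Cart A D)" and e2: "e2 \<in> M \<inter> cArr (Cart A D)"
      and d: "cDom ?C e2 = cCod ?C e1"
    have "cComp ?C e2 e1 \<in> M" using cM e1 e2 d by blast
    then show "cComp ?C e2 e1 \<in> M \<inter> cArr (Cart A D)"
      using sub e1 e2 by (auto simp: Cart_arr CartNt_comp_dom)
  next
    fix e m f g
    assume e: "e \<in> E \<inter> cArr (Cart A D)" and m: "m \<in> M \<inter> cArr (Cart A D)"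
      and f: "f \<in> cArr (Cart A D)" and g: "g \<in> cArr (Cart A D)"
      and sq: "cDom ?C f = cDom ?C e \<and> cCod ?C f = cDom ?C m \<and> cDom ?C g = cCod ?C e \<and> cCod ?C g = cCod ?C m \<and>
        cComp ?C g e = cComp ?C m f"
    have "\<exists>!d. d \<in> cArr ?C \<and> cDom ?C d = cCod ?C e \<and> cCod ?C d = cDom ?C m \<and>
              cComp ?C d e = f \<and> cComp ?C m d = g"
    proof (rule lift[rule_format])
      show "e \<in> E" "m \<in> M" using e m by simp_all
      show "f \<in> cArr ?C" "g \<in> cArr ?C" using f g Cart_arr by blast+
    qed (rule sq)
    then obtain d where d: "d \<in> cArr ?C" "cDom ?C d = cCod ?C e" "cCod ?C d = cDom ?C m"
              "cComp ?C d e = f" "cComp ?C m d = g"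
      and du: "\<And>d'. d' \<in> cArr ?C \<and> cDom ?C d' = cCod ?C e \<and> cCod ?C d' = cDom ?C m \<and>
              cComp ?C d' e = f \<and> cComp ?C m d' = g \<Longrightarrow> d' = d" by blast
    have ecf: "cartesian_functor A D (cCod ?C e)" using e Cart_arr by blast
    have mcf: "cartesian_functor A D (cDom ?C m)" using m Cart_arr by blast
    have dC: "d \<in> cArr (Cart A D)" using d(1) ecf mcf d(2,3) Cart_arr by metis
    show "\<exists>!d. d \<in> cArr (Cart A D) \<and> cDom ?C d = cCod ?C e \<and> cCod ?C d = cDom ?C m \<and>
              cComp ?C d e = f \<and> cComp ?C m d = g"
    proof (rule ex1I[of _ d])
      show "d \<in> cArr (Cart A D) \<and> cDom ?C d = cCod ?C e \<and> cCod ?C d = cDom ?C m \<and>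
              cComp ?C d e = f \<and> cComp ?C m d = g" using dC d by simp
    next
      fix d' assume "d' \<in> cArr (Cart A D) \<and> cDom ?C d' = cCod ?C e \<and> cCod ?C d' = cDom ?C m \<and>
              cComp ?C d' e = f \<and> cComp ?C m d' = g"
      then show "d' = d" using du Cart_arr by blast
    qed
  next
    fix h assume h: "h \<in> cArr (Cart A D)"
    have hC: "h \<in> cArr ?C" using h Cart_arr by blast
    obtain e m where em: "e \<in> E" "m \<in> M" "cDom ?C m = cCod ?C e" "cComp ?C m e = h"
      using fact hC by blast
    have hd: "cDom ?C e = cDom ?C h" "cCod ?C m = cCod ?C h"
      using em(4) CartNt_comp_dom by metis+
    have hcf: "cartesian_functor A D (cDom ?C h)" "cartesian_functor A D (cCod ?C h)"
      using h Cart_arr by blast+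
    have mC: "m \<in> cArr ?C" using em(2) sub by blast
    have eC: "e \<in> cArr ?C" using em(1) sub by blast
    have mnt: "cartesian_nt A D (cDom ?C m) (cCod ?C m) (snd (snd m))" using mC CartNt_arr by blast
    have mid: "cartesian_functor A D (cDom ?C m)"
      by (rule cart_mid[OF assms(1) assms(3) mnt]) (use hcf hd in simp)
    have "e \<in> cArr (Cart A D)" using eC hcf hd mid em(3) Cart_arr by metis
    moreover have "m \<in> cArr (Cart A D)" using mC hcf hd mid Cart_arr by metis
    ultimately show "\<exists>e\<in>E \<inter> cArr (Cart A D). \<exists>m\<in>M \<inter> cArr (Cart A D). cDom ?C m = cCod ?C e \<and> cComp ?C m e = h"
      using em by blast
  qed
qed

end
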